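(* Fix bidder $i$ and $v_{-i}$, and assume $f_{i,k}>0$ for all $k$. Suppose $k\mapsto x_i(z_{i,k},v_{-i})$ is non-decreasing, the actual payments $p_i(z_{i,k},v_{-i})\ge0$ satisfy $p_i(z_{i,\ell},v_{-i})^2= z_{i,\ell}x_i(z_{i,\ell},v_{-i})-\sum_{j=1}^{\ell-1}(z_{i,j+1}-z_{i,j})x_i(z_{i,j},v_{-i})$ for all $\ell$, and $p_i(z_{i,k},v_{-i})>0$ for all $k$. Then $$\sum_{k=1}^{K_i} f_{i,k}\,p_i(z_{i,k},v_{-i})\ \ge\ \sum_{k=1}^{K_i} f_{i,k}\,\frac{\varphi_{i,k}\,x_i(z_{i,k},v_{-i})}{p_i(z_{i,k},v_{-i})}.$$
   Context: Bidder $i$'s type space is $V_i=\{z_{i,1}<\dots<z_{i,K_i}\}\subset[0,\infty)$, with the convention $z_{i,K_i+1}=z_{i,K_i}$; $f_{i,k}$ is the probability of $z_{i,k}$ and $F_{i,k}=\sum_{j\le k}f_{i,j}$. The (discrete) virtual value is $\varphi_{i,k}=z_{i,k}-(z_{i,k+1}-z_{i,k})\frac{1-F_{i,k}}{f_{i,k}}$. $x_i(\cdot,v_{-i}):V_i\to[0,1]$ is bidder $i$'s allocation given the others' types $v_{-i}$. *)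

theory Defs
  imports "HOL-Analysis.Analysis"
begin

(* Type space of bidder i: z 1 < ... < z K, indexed 1..K.
   Extended value with convention z_{K+1} = z_K. *)
definition zext :: "(nat \<Rightarrow> real) \<Rightarrow> nat \<Rightarrow> nat \<Rightarrow> real" where
  "zext z K k = (if k = K + 1 then z K else z k)"

definition cdf :: "(nat \<Rightarrow> real) \<Rightarrow> nat \<Rightarrow> real" where
  "cdf f k = (\<Sum>j=1..k. f j)"

definition virtual_value :: "(nat \<Rightarrow> real) \<Rightarrow> (nat \<Rightarrow> real) \<Rightarrow> nat \<Rightarrow> nat \<Rightarrow> real" where
  "virtual_value z f K k = z k - (zext z K (k + 1) - z k) * (1 - cdf f k) / f k"

end

theory Submission
  imports Defs
begin

theorem mainTheorem3:
  fixes K :: nat and z f x p :: "nat \<Rightarrow> real"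
  assumes K_pos: "K \<ge> 1"
    and z_nonneg: "z 1 \<ge> 0"
    and z_strict: "\<And>k. 1 \<le> k \<Longrightarrow> k < K \<Longrightarrow> z k < z (k + 1)"
    and f_pos: "\<And>k. 1 \<le> k \<Longrightarrow> k \<le> K \<Longrightarrow> f k > 0"
    and f_sum: "(\<Sum>k=1..K. f k) = 1"
    and x_range: "\<And>k. 1 \<le> k \<Longrightarrow> k \<le> K \<Longrightarrow> 0 \<le> x k \<and> x k \<le> 1"
    and x_mono: "\<And>k l. 1 \<le> k \<Longrightarrow> k \<le> l \<Longrightarrow> l \<le> K \<Longrightarrow> x k \<le> x l"
    and p_nonneg: "\<And>k. 1 \<le> k \<Longrightarrow> k \<le> K \<Longrightarrow> p k \<ge> 0"
    and p_sq: "\<And>l. 1 \<le> l \<Longrightarrow> l \<le> K \<Longrightarrow>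
        (p l)\<^sup>2 = z l * x l - (\<Sum>j=1..l-1. (z (j + 1) - z j) * x j)"
    and p_pos: "\<And>k. 1 \<le> k \<Longrightarrow> k \<le> K \<Longrightarrow> p k > 0"
  shows "(\<Sum>k=1..K. f k * p k) \<ge>
         (\<Sum>k=1..K. f k * (virtual_value z f K k * x k / p k))"
proof -
  have zm: "z 1 \<le> z (1+m)" if "1+m \<le> K" for m
    using that
  proof (induction m)
    case 0 then show ?case by simp
  next
    case (Suc m)
    have "z (1+m) < z (1+m+1)" using z_strict[of "1+m"] Suc.prems by simp
    then show ?case using Suc by simp
  qed
  have zpos: "z k \<ge> 0" if "1 \<le> k" "k \<le> K" for k
    using zm[of "k-1"] that z_nonneg by simp
  have qstep: "(p k)\<^sup>2 \<le> (p (k+1))\<^sup>2" if "1 \<le> k" "k < K" for k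
  proof -
    have s: "(\<Sum>j=1..k. (z (j + 1) - z j) * x j) =
        (\<Sum>j=1..k-1. (z (j + 1) - z j) * x j) + (z (k + 1) - z k) * x k"
    proof -
      define m where "m = k - 1"
      have k: "k = Suc m" using m_def \<open>1 \<le> k\<close> by simp
      show ?thesis unfolding k by (simp add: sum.cl_ivl_Suc)
    qed
    have e1: "(p (k+1))\<^sup>2 = z (k+1) * x (k+1) - (\<Sum>j=1..k. (z (j + 1) - z j) * x j)"
      using p_sq[of "k+1"] that by simp
    have e2: "(p k)\<^sup>2 = z k * x k - (\<Sum>j=1..k-1. (z (j + 1) - z j) * x j)"
      using p_sq[of k] that by simp
    have "(p (k+1))\<^sup>2 - (p k)\<^sup>2 = z (k+1) * (x (k+1) - x k)"
      using e1 e2 s by (simp add: algebra_simps)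
    moreover have "z (k+1) * (x (k+1) - x k) \<ge> 0"
      using zpos[of "k+1"] x_mono[of k "k+1"] that by simp
    ultimately show ?thesis by linarith
  qed
  have qm: "(p k)\<^sup>2 \<le> (p (k+m))\<^sup>2" if "1 \<le> k" "k+m \<le> K" for k m
    using that
  proof (induction m)
    case 0 then show ?case by simp
  next
    case (Suc m)
    have i: "(p k)\<^sup>2 \<le> (p (k+m))\<^sup>2" using Suc.IH Suc.prems by simp
    have j: "(p (k+m))\<^sup>2 \<le> (p (k+m+1))\<^sup>2" using qstep[of "k+m"] Suc.prems by simp
    show ?case using i j by simp
  qed
  have pm: "p k \<le> p l" if "1 \<le> k" "k \<le> l" "l \<le> K" for k l
  proof -
    have lk: "k + (l-k) = l" using that by simp
    have "(p k)\<^sup>2 \<le> (p (k + (l-k)))\<^sup>2" by (rule qm) (use that lk in auto)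
    then have "(p k)\<^sup>2 \<le> (p l)\<^sup>2" unfolding lk .
    moreover have "0 \<le> p l" using p_nonneg[of l] that by linarith
    ultimately show ?thesis by (rule power2_le_imp_le)
  qed
  define a where "a j = (zext z K (j+1) - z j) * x j" for j
  have a_nonneg: "a k \<ge> 0" if "1 \<le> k" "k \<le> K" for k
  proof (cases "k = K")
    case True then show ?thesis by (simp add: a_def zext_def)
  next
    case False
    then have "z k < z (k+1)" using z_strict that by simp
    then show ?thesis using False x_range[of k] that by (simp add: a_def zext_def)
  qed
  have cdf_eq: "1 - cdf f k = (\<Sum>l=k+1..K. f l)" if "1 \<le> k" "k \<le> K" for k
  proof -
    have "(\<Sum>l=1..k+(K-k). f l) = (\<Sum>l=1..k. f l) + (\<Sum>l=k+1..k+(K-k). f l)"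
      by (rule sum.ub_add_nat) (use that in simp)
    then show ?thesis using f_sum that by (simp add: cdf_def)
  qed
  define A where "A k = f k * z k * x k / p k" for k
  define g where "g k l = f l * a k" for k l
  have h1: "f k * (virtual_value z f K k * x k / p k) = A k - (\<Sum>l=k+1..K. g k l / p k)"
    if "k \<in> {1..K}" for k
  proof -
    have fk: "f k \<noteq> 0" using f_pos[of k] that by simp
    have sg: "(\<Sum>l=k+1..K. g k l / p k) = (\<Sum>l=k+1..K. f l) * a k / p k"
      by (simp add: g_def sum_distrib_right sum_divide_distrib)
    have vv: "virtual_value z f K k = z k - (zext z K (k+1) - z k) * (\<Sum>l=k+1..K. f l) / f k"
      unfolding virtual_value_def using cdf_eq[of k] that by simp
    have pk: "p k \<noteq> 0" using p_pos[of k] that by simp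
    show ?thesis using fk pk
      unfolding sg A_def a_def vv
      by (simp add: field_simps)
  qed
  have h2: "(\<Sum>k=1..K. \<Sum>l=k+1..K. g k l / p l) \<le> (\<Sum>k=1..K. \<Sum>l=k+1..K. g k l / p k)"
  proof (rule sum_mono, rule sum_mono)
    fix k l assume k: "k \<in> {1..K}" and l: "l \<in> {k+1..K}"
    have "g k l \<ge> 0" using a_nonneg[of k] f_pos[of l] k l by (simp add: g_def)
    moreover have "p k \<le> p l" "p k > 0" using pm[of k l] p_pos[of k] k l by auto
    ultimately show "g k l / p l \<le> g k l / p k" by (simp add: divide_left_mono)
  qed
  have h3: "(\<Sum>k=1..K. \<Sum>l=k+1..K. g k l / p l) = (\<Sum>l=1..K. \<Sum>k=1..l-1. g k l / p l)"
  proof -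
    have "(\<Sum>k=1..K. \<Sum>l=k+1..K. g k l / p l) = (\<Sum>k\<in>{1..K}. \<Sum>l\<in>{l\<in>{1..K}. k < l}. g k l / p l)"
      by (rule sum.cong) (auto intro: sum.cong)
    also have "\<dots> = (\<Sum>l\<in>{1..K}. \<Sum>k\<in>{k\<in>{1..K}. k < l}. g k l / p l)"
      by (rule sum.swap_restrict) auto
    also have "\<dots> = (\<Sum>l=1..K. \<Sum>k=1..l-1. g k l / p l)"
    proof (rule sum.cong)
      fix l assume "l \<in> {1..K}"
      then have "{k\<in>{1..K}. k < l} = {1..l-1}" by auto
      then show "(\<Sum>k\<in>{k\<in>{1..K}. k < l}. g k l / p l) = (\<Sum>k=1..l-1. g k l / p l)" by simp
    qed simp
    finally show ?thesis .
  qed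
  have h4: "A l - (\<Sum>k=1..l-1. g k l / p l) = f l * p l" if "l \<in> {1..K}" for l
  proof -
    have "(\<Sum>k=1..l-1. a k) = (\<Sum>j=1..l-1. (z (j + 1) - z j) * x j)"
      by (rule sum.cong) (use that in \<open>auto simp: a_def zext_def\<close>)
    moreover have "(\<Sum>k=1..l-1. g k l / p l) = f l * (\<Sum>k=1..l-1. a k) / p l"
      by (simp add: g_def sum_distrib_left sum_divide_distrib)
    ultimately have "(\<Sum>k=1..l-1. g k l / p l) = f l * (\<Sum>j=1..l-1. (z (j + 1) - z j) * x j) / p l"
      by simp
    note gs = this
    have pl: "p l > 0" using p_pos that by simp
    let ?S = "(\<Sum>j=1..l-1. (z (j + 1) - z j) * x j)"
    have "A l - (\<Sum>k=1..l-1. g k l / p l) = f l * (z l * x l - ?S) / p l"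
      unfolding gs A_def by (simp add: diff_divide_distrib right_diff_distrib)
    also have "\<dots> = f l * (p l)\<^sup>2 / p l" using p_sq[of l] that by simp
    also have "\<dots> = f l * p l" using pl by (simp add: power2_eq_square)
    finally show ?thesis .
  qed
  have "(\<Sum>k=1..K. f k * (virtual_value z f K k * x k / p k))
      = (\<Sum>k=1..K. A k) - (\<Sum>k=1..K. \<Sum>l=k+1..K. g k l / p k)"
    using h1 by (simp add: sum_subtractf)
  also have "\<dots> \<le> (\<Sum>k=1..K. A k) - (\<Sum>l=1..K. \<Sum>k=1..l-1. g k l / p l)"
    using h2 h3 by simp
  also have "\<dots> = (\<Sum>l=1..K. A l - (\<Sum>k=1..l-1. g k l / p l))"
    by (simp add: sum_subtractf)
  also have "\<dots> = (\<Sum>l=1..K. f l * p l)"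
    using h4 by simp
  finally show ?thesis .
qed

end
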